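(* For any weighted undirected graph $G=(V,E,w)$, let $\mathcal T_{\mathrm{bal}}$ be any HC-tree obtained by the recursive $\frac13$-balanced min-cut procedure on $G$. Then $C_G(\mathcal T_{\mathrm{bal}})\le 9\cdot\mathrm{OPT}(G)$.
   Context: Let $G=(V,E,w)$ be an undirected graph with nonnegative edge weights. A hierarchical clustering tree (HC-tree) of $G$ is a rooted tree $\mathcal T$ whose leaves are in bijection with $V$. For a node $z$, $\mathcal T[z]$ is the subtree rooted at $z$ and $\mathrm{leaves}(\mathcal T[z])$ its set of leaves; $u\vee v$ is the lowest common ancestor of $u,v$. The cost is $C_G(\mathcal T)=\sum_{(u,v)\in E} w(u,v)\,|\mathrm{leaves}(\mathcal T[u\vee v])|$ and $\mathrm{OPT}(G)=\min_{\mathcal T}C_G(\mathcal T)$. For disjoint $A,B\subseteq V$, $w(A,B)$ is the total weight of edges between $A$ and $B$. If $\mathcal T$ is binary and $z$ is internal with children $z_1,z_2$, $|\mathrm{leaves}(\mathcal T[z_1])|\le|\mathrm{leaves}(\mathcal T[z_2])|$, then $\mathrm{cut}(\mathcal T[z])=(\mathrm{leaves}(\mathcal T[z_1]),\mathrm{leaves}(\mathcal T[z_2]))$. A pair of disjoint sets $(A,B)$ is $\beta$-balanced if $\max\{|A|,|B|\}\le(1-\beta)|A\cup B|$. The recursive $\beta$-balanced min-cut procedure produces a binary HC-tree in which, for every internal node $z$ with $S=\mathrm{leaves}(\mathcal T[z])$, the partition $\mathrm{cut}(\mathcal T[z])=(A,B)$ of $S$ is $\beta$-balanced and minimizes $w(A,B)$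 among all $\beta$-balanced partitions of $S$ into two parts (ties broken arbitrarily). *)

theory Defs
  imports Complex_Main
begin

definition wgraph :: "'a set \<Rightarrow> 'a set set \<Rightarrow> ('a set \<Rightarrow> real) \<Rightarrow> bool" where
  "wgraph V E w \<longleftrightarrow> finite V \<and> (\<forall>e\<in>E. e \<subseteq> V \<and> card e = 2 \<and> w e \<ge> 0)"

definition cut_weight :: "'a set set \<Rightarrow> ('a set \<Rightarrow> real) \<Rightarrow> 'a set \<Rightarrow> 'a set \<Rightarrow> real" where
  "cut_weight E w A B = (\<Sum>e\<in>{e\<in>E. e \<inter> A \<noteq> {} \<and> e \<inter> B \<noteq> {}}. w e)"

datatype 'a hctree = Leaf 'a | Node "'a hctree list"

fun leaves :: "'a hctree \<Rightarrow> 'a list" where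
  "leaves (Leaf x) = [x]"
| "leaves (Node ts) = concat (map leaves ts)"

abbreviation leafset :: "'a hctree \<Rightarrow> 'a set" where
  "leafset t \<equiv> set (leaves t)"

fun children :: "'a hctree \<Rightarrow> 'a hctree list" where
  "children (Leaf x) = []"
| "children (Node ts) = ts"

text \<open>Internal nodes have at least one child (so that every leaf of the rooted tree is a
  labelled Leaf).\<close>
fun wf_tree :: "'a hctree \<Rightarrow> bool" where
  "wf_tree (Leaf x) = True"
| "wf_tree (Node ts) = (ts \<noteq> [] \<and> (\<forall>t\<in>set ts. wf_tree t))"

definition hc_tree :: "'a set \<Rightarrow> 'a hctree \<Rightarrow> bool" where
  "hc_tree V T \<longleftrightarrow> wf_tree T \<and> distinct (leaves T) \<and> leafset T = V"

fun subtrees :: "'a hctree \<Rightarrow> 'a hctree set" where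
  "subtrees (Leaf x) = {Leaf x}"
| "subtrees (Node ts) = insert (Node ts) (\<Union>t\<in>set ts. subtrees t)"

text \<open>T[u \<or> v]: the subtree rooted at the lowest common ancestor of u and v, i.e. the
  common ancestor none of whose children is a common ancestor.\<close>
definition lca_subtree :: "'a hctree \<Rightarrow> 'a \<Rightarrow> 'a \<Rightarrow> 'a hctree" where
  "lca_subtree T u v = (THE s. s \<in> subtrees T \<and> {u, v} \<subseteq> leafset s \<and>
      (\<forall>c\<in>set (children s). \<not> {u, v} \<subseteq> leafset c))"

definition edge_lca :: "'a hctree \<Rightarrow> 'a set \<Rightarrow> 'a hctree" where
  "edge_lca T e = (THE s. \<exists>u v. e = {u, v} \<and> u \<noteq> v \<and> s = lca_subtree T u v)"

definition hc_cost :: "'a set set \<Rightarrow> ('a set \<Rightarrow> real) \<Rightarrow> 'a hctree \<Rightarrow> real" where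
  "hc_cost E w T = (\<Sum>e\<in>E. w e * real (card (leafset (edge_lca T e))))"

definition OPT :: "'a set \<Rightarrow> 'a set set \<Rightarrow> ('a set \<Rightarrow> real) \<Rightarrow> real" where
  "OPT V E w = (INF T\<in>{T. hc_tree V T}. hc_cost E w T)"

definition balanced :: "real \<Rightarrow> 'a set \<Rightarrow> 'a set \<Rightarrow> bool" where
  "balanced \<beta> A B \<longleftrightarrow> real (max (card A) (card B)) \<le> (1 - \<beta>) * real (card (A \<union> B))"

fun bal_mincut_tree :: "real \<Rightarrow> 'a set set \<Rightarrow> ('a set \<Rightarrow> real) \<Rightarrow> 'a hctree \<Rightarrow> bool" where
  "bal_mincut_tree \<beta> E w (Leaf x) = True"
| "bal_mincut_tree \<beta> E w (Node ts) =
     (case ts of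
        [t1, t2] \<Rightarrow>
          balanced \<beta> (leafset t1) (leafset t2) \<and>
          (\<forall>A B. A \<inter> B = {} \<and> A \<union> B = leafset (Node ts) \<and> balanced \<beta> A B \<longrightarrow>
                 cut_weight E w (leafset t1) (leafset t2) \<le> cut_weight E w A B) \<and>
          bal_mincut_tree \<beta> E w t1 \<and> bal_mincut_tree \<beta> E w t2
      | _ \<Rightarrow> False)"

end

theory Submission
  imports Defs
begin


definition Pl :: "'a hctree \<Rightarrow> 'a set \<Rightarrow> 'a hctree \<Rightarrow> bool" where
  "Pl T e s \<longleftrightarrow> s \<in> subtrees T \<and> e \<subseteq> leafset s \<and> (\<forall>c\<in>set (children s). \<not> e \<subseteq> leafset c)"

definition lcaS :: "'a hctree \<Rightarrow> 'a set \<Rightarrow> 'a hctree" where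
  "lcaS T e = (THE s. Pl T e s)"

abbreviation Lc :: "'a hctree \<Rightarrow> 'a set \<Rightarrow> nat" where
  "Lc T e \<equiv> card (leafset (lcaS T e))"

lemma subtrees_self: "T \<in> subtrees T"
  by (cases T) auto

lemma subtrees_leafset: "s \<in> subtrees T \<Longrightarrow> leafset s \<subseteq> leafset T"
  by (induction T rule: subtrees.induct) auto

lemma subtrees_trans: "s \<in> subtrees T \<Longrightarrow> r \<in> subtrees s \<Longrightarrow> r \<in> subtrees T"
  by (induction T rule: subtrees.induct) auto

lemma subtrees_distinct: "s \<in> subtrees T \<Longrightarrow> distinct (leaves T) \<Longrightarrow> distinct (leaves s)"
  by (induction T rule: subtrees.induct) (auto simp: distinct_concat_iff)

lemma child_eq_aux: "distinct (concat (map leaves ts)) \<Longrightarrow> c \<in> set ts \<Longrightarrow> c' \<in> set ts \<Longrightarrow>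
   x \<in> leafset c \<Longrightarrow> x \<in> leafset c' \<Longrightarrow> c = c'"
  by (induction ts) auto

lemma child_eq: "distinct (leaves (Node ts)) \<Longrightarrow> c \<in> set ts \<Longrightarrow> c' \<in> set ts \<Longrightarrow>
   x \<in> leafset c \<Longrightarrow> x \<in> leafset c' \<Longrightarrow> c = c'"
  using child_eq_aux by fastforce

lemma Pl_child:
  assumes "distinct (leaves (Node ts))" "c \<in> set ts" "e \<subseteq> leafset c" "e \<noteq> {}"
  shows "Pl (Node ts) e s \<longleftrightarrow> Pl c e s"
proof
  assume H: "Pl (Node ts) e s"
  hence s: "s \<in> subtrees (Node ts)" and es: "e \<subseteq> leafset s" unfolding Pl_def by auto
  have "s \<noteq> Node ts" using H assms unfolding Pl_def by auto
  then obtain c' where c': "c' \<in> set ts" "s \<in> subtrees c'" using s by auto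
  obtain x where x: "x \<in> e" using assms(4) by auto
  have "x \<in> leafset c'" using subtrees_leafset[OF c'(2)] es x by auto
  hence "c' = c" using child_eq[OF assms(1) c'(1) assms(2)] x assms(3) by auto
  thus "Pl c e s" using H c' unfolding Pl_def by auto
next
  assume "Pl c e s" thus "Pl (Node ts) e s" using assms(2) unfolding Pl_def by auto
qed

lemma Pl_root:
  assumes "\<forall>c\<in>set ts. \<not> e \<subseteq> leafset c" "e \<subseteq> leafset (Node ts)"
  shows "Pl (Node ts) e s \<longleftrightarrow> s = Node ts"
proof
  assume H: "Pl (Node ts) e s"
  show "s = Node ts"
  proof (rule ccontr)
    assume "s \<noteq> Node ts"
    then obtain c' where c': "c' \<in> set ts" "s \<in> subtrees c'" using H unfolding Pl_def by auto
    have "e \<subseteq> leafset c'" using subtrees_leafset[OF c'(2)] H unfolding Pl_def by auto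
    thus False using assms c' by auto
  qed
next
  assume "s = Node ts" thus "Pl (Node ts) e s" using assms unfolding Pl_def by auto
qed

lemma Pl_ex1: "distinct (leaves T) \<Longrightarrow> e \<subseteq> leafset T \<Longrightarrow> e \<noteq> {} \<Longrightarrow> \<exists>!s. Pl T e s"
proof (induction T rule: hctree.induct)
  case (Leaf x)
  then show ?case unfolding Pl_def by auto
next
  case (Node ts)
  show ?case
  proof (cases "\<exists>c\<in>set ts. e \<subseteq> leafset c")
    case True
    then obtain c where c: "c \<in> set ts" "e \<subseteq> leafset c" by auto
    have "distinct (leaves c)" using Node.prems(1) c(1) by (auto simp: distinct_concat_iff)
    hence "\<exists>!s. Pl c e s" using Node.IH c Node.prems by auto
    thus ?thesis using Pl_child[OF Node.prems(1) c Node.prems(3)] by simp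
  next
    case False
    thus ?thesis using Pl_root[OF _ Node.prems(2)] by auto
  qed
qed

lemma lcaS_Pl: "distinct (leaves T) \<Longrightarrow> e \<subseteq> leafset T \<Longrightarrow> e \<noteq> {} \<Longrightarrow> Pl T e (lcaS T e)"
  unfolding lcaS_def by (rule theI') (rule Pl_ex1)

lemma lcaS_child: "distinct (leaves (Node ts)) \<Longrightarrow> c \<in> set ts \<Longrightarrow> e \<subseteq> leafset c \<Longrightarrow> e \<noteq> {}
   \<Longrightarrow> lcaS (Node ts) e = lcaS c e"
proof -
  assume a: "distinct (leaves (Node ts))" "c \<in> set ts" "e \<subseteq> leafset c" "e \<noteq> {}"
  have "Pl (Node ts) e = Pl c e" by (rule ext) (rule Pl_child[OF a])
  thus ?thesis unfolding lcaS_def by simp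
qed

lemma lcaS_root: "\<forall>c\<in>set ts. \<not> e \<subseteq> leafset c \<Longrightarrow> e \<subseteq> leafset (Node ts) \<Longrightarrow> lcaS (Node ts) e = Node ts"
proof -
  assume a: "\<forall>c\<in>set ts. \<not> e \<subseteq> leafset c" "e \<subseteq> leafset (Node ts)"
  have "Pl (Node ts) e = (\<lambda>s. s = Node ts)" by (rule ext) (rule Pl_root[OF a])
  thus ?thesis unfolding lcaS_def by simp
qed

lemma lcaS_Leaf: "e \<subseteq> {x} \<Longrightarrow> lcaS (Leaf x) e = Leaf x"
  unfolding lcaS_def by (rule the_equality) (auto simp: Pl_def)

lemma lca_ge: "distinct (leaves T) \<Longrightarrow> t \<in> subtrees T \<Longrightarrow> e \<subseteq> leafset T \<Longrightarrow> e \<noteq> {} \<Longrightarrow>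
  e \<inter> leafset t \<noteq> {} \<Longrightarrow> (\<forall>c\<in>set (children t). \<not> e \<subseteq> leafset c) \<Longrightarrow> card (leafset t) \<le> Lc T e"
proof (induction T arbitrary: t rule: hctree.induct)
  case (Leaf x)
  then show ?case by (simp add: lcaS_Leaf)
next
  case (Node ts)
  show ?case
  proof (cases "\<exists>c\<in>set ts. e \<subseteq> leafset c")
    case True
    then obtain c where c: "c \<in> set ts" "e \<subseteq> leafset c" by auto
    have eq: "lcaS (Node ts) e = lcaS c e" using lcaS_child[OF Node.prems(1) c Node.prems(4)] .
    have "t \<noteq> Node ts" using Node.prems(6) c by auto
    then obtain c' where c': "c' \<in> set ts" "t \<in> subtrees c'" using Node.prems(2) by auto
    obtain x where x: "x \<in> e" "x \<in> leafset t" using Node.prems(5) by auto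
    have "x \<in> leafset c'" using subtrees_leafset[OF c'(2)] x by auto
    hence "c' = c" using child_eq[OF Node.prems(1) c'(1) c(1)] x c by auto
    have dc: "distinct (leaves c)" using Node.prems(1) c(1) by (auto simp: distinct_concat_iff)
    show ?thesis unfolding eq
      using Node.IH[OF c(1) dc _ c(2) Node.prems(4) Node.prems(5) Node.prems(6)] c' \<open>c' = c\<close> by auto
  next
    case False
    hence "lcaS (Node ts) e = Node ts" using lcaS_root Node.prems(3) by blast
    thus ?thesis using subtrees_leafset[OF Node.prems(2)] by (simp add: card_mono)
  qed
qed

lemma edge_lca_eq:
  assumes "card e = 2" shows "edge_lca T e = lcaS T e"
proof -
  obtain u v where uv: "e = {u, v}" "u \<noteq> v" using assms card_2_iff by metis
  have L: "lca_subtree T a b = lcaS T {a, b}" for a b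
    unfolding lca_subtree_def lcaS_def Pl_def by simp
  show ?thesis unfolding edge_lca_def L
    by (rule the_equality) (use uv in auto)
qed



lemma leafset_Node: "leafset (Node cs) = (\<Union>i<length cs. leafset (cs ! i))"
proof -
  have "set cs = (\<lambda>i. cs ! i) ` {..<length cs}" by (auto simp: in_set_conv_nth image_iff)
  thus ?thesis by (simp add: image_image)
qed

lemma descent_finish:
  assumes dT: "distinct (leaves T)" and t: "Node cs \<in> subtrees T"
    and I: "I \<subseteq> {..<length cs}" and A: "A = S \<inter> (\<Union>i\<in>I. leafset (cs ! i))"
    and big: "2 * card S < 3 * card (S \<inter> leafset (Node cs))"
  shows "\<forall>e. e \<subseteq> leafset T \<longrightarrow> e \<noteq> {} \<longrightarrow> e \<inter> A \<noteq> {} \<longrightarrow> e \<inter> (S - A) \<noteq> {} \<longrightarrow> 2 * card S < 3 * Lc T e"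
proof (intro allI impI)
  fix e assume e: "e \<subseteq> leafset T" "e \<noteq> {}" "e \<inter> A \<noteq> {}" "e \<inter> (S - A) \<noteq> {}"
  obtain a where a: "a \<in> e" "a \<in> A" using e by auto
  obtain b where b: "b \<in> e" "b \<in> S" "b \<notin> A" using e by auto
  obtain i where i: "i \<in> I" "a \<in> leafset (cs ! i)" using a A by auto
  have dN: "distinct (leaves (Node cs))" using subtrees_distinct[OF t dT] .
  have nc: "\<forall>c\<in>set (children (Node cs)). \<not> e \<subseteq> leafset c"
  proof (intro ballI notI)
    fix c assume c: "c \<in> set (children (Node cs))" "e \<subseteq> leafset c"
    have ci: "cs ! i \<in> set cs" using i I by auto
    have "c = cs ! i" using child_eq[OF dN _ ci, of c a] c a i by auto
    hence "b \<in> A" using c b i A by auto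
    thus False using b by auto
  qed
  have ci0: "cs ! i \<in> set cs" using i I by auto
  have "a \<in> leafset (Node cs)" using ci0 i by auto
  hence "e \<inter> leafset (Node cs) \<noteq> {}" using a by auto
  hence "card (leafset (Node cs)) \<le> Lc T e" using lca_ge[OF dT t e(1) e(2) _ nc] by blast
  moreover have "card (S \<inter> leafset (Node cs)) \<le> card (leafset (Node cs))"
    by (rule card_mono) auto
  ultimately show "2 * card S < 3 * Lc T e" using big by linarith
qed

lemma descent:
  assumes dT: "distinct (leaves T)" and fin: "finite S" and m2: "card S \<ge> 2"
  shows "t \<in> subtrees T \<Longrightarrow> 2 * card S < 3 * card (S \<inter> leafset t) \<Longrightarrow>
    \<exists>A. A \<subseteq> S \<and> card S \<le> 3 * card A \<and> 3 * card A \<le> 2 * card S \<and>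
      (\<forall>e. e \<subseteq> leafset T \<longrightarrow> e \<noteq> {} \<longrightarrow> e \<inter> A \<noteq> {} \<longrightarrow> e \<inter> (S - A) \<noteq> {} \<longrightarrow> 2 * card S < 3 * Lc T e)"
proof (induction t rule: hctree.induct)
  case (Leaf x)
  have "card (S \<inter> leafset (Leaf x)) \<le> 1" by (simp add: card_le_Suc0_iff_eq)
  then show ?case using Leaf.prems m2 by linarith
next
  case (Node cs)
  let ?m = "card S"
  show ?case
  proof (cases "\<exists>c\<in>set cs. 2 * ?m < 3 * card (S \<inter> leafset c)")
    case True
    then obtain c where c: "c \<in> set cs" "2 * ?m < 3 * card (S \<inter> leafset c)" by auto
    have "c \<in> subtrees T" using subtrees_trans[OF Node.prems(1)] c(1) subtrees_self[of c] by auto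
    thus ?thesis using Node.IH[OF c(1)] c(2) by blast
  next
    case False
    hence small: "\<forall>c\<in>set cs. 3 * card (S \<inter> leafset c) \<le> 2 * ?m" by auto
    have "\<exists>I. I \<subseteq> {..<length cs} \<and> ?m \<le> 3 * card (S \<inter> (\<Union>i\<in>I. leafset (cs ! i)))
            \<and> 3 * card (S \<inter> (\<Union>i\<in>I. leafset (cs ! i))) \<le> 2 * ?m"
    proof (cases "\<exists>j<length cs. ?m \<le> 3 * card (S \<inter> leafset (cs ! j))")
      case True
      then obtain j where j: "j < length cs" "?m \<le> 3 * card (S \<inter> leafset (cs ! j))" by auto
      have "3 * card (S \<inter> leafset (cs ! j)) \<le> 2 * ?m" using small j(1) by auto
      thus ?thesis using j by (intro exI[of _ "{j}"]) auto
    next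
      case False
      hence sm: "\<forall>j<length cs. 3 * card (S \<inter> leafset (cs ! j)) < ?m" by auto
      define U where "U k = S \<inter> (\<Union>i\<in>{..<k}. leafset (cs ! i))" for k
      have Ulen: "U (length cs) = S \<inter> leafset (Node cs)" unfolding U_def leafset_Node by simp
      have ex: "\<exists>k. ?m \<le> 3 * card (U k)" using Ulen Node.prems(2) by (intro exI[of _ "length cs"]) auto
      define k where "k = (LEAST k. ?m \<le> 3 * card (U k))"
      have k1: "?m \<le> 3 * card (U k)" unfolding k_def by (rule LeastI_ex[OF ex])
      have kle: "k \<le> length cs" unfolding k_def
        using Ulen Node.prems(2) by (intro Least_le) auto
      have "k \<noteq> 0"
      proof
        assume "k = 0" thus False using k1 m2 by (simp add: U_def)
      qed
      then obtain k' where k': "k = Suc k'" by (cases k) auto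
      have k2: "\<not> ?m \<le> 3 * card (U k')" using not_less_Least[of k' "\<lambda>k. ?m \<le> 3 * card (U k)"] k' k_def by auto
      have "U k = U k' \<union> (S \<inter> leafset (cs ! k'))" unfolding U_def k' lessThan_Suc by auto
      hence "card (U k) \<le> card (U k') + card (S \<inter> leafset (cs ! k'))" by (simp add: card_Un_le)
      moreover have "3 * card (S \<inter> leafset (cs ! k')) < ?m" using sm k' kle by auto
      ultimately have "3 * card (U k) \<le> 2 * ?m" using k2 by linarith
      thus ?thesis using k1 kle by (intro exI[of _ "{..<k}"]) (auto simp: U_def)
    qed
    then obtain I where I: "I \<subseteq> {..<length cs}" "?m \<le> 3 * card (S \<inter> (\<Union>i\<in>I. leafset (cs ! i)))"
         "3 * card (S \<inter> (\<Union>i\<in>I. leafset (cs ! i))) \<le> 2 * ?m" by blast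
    show ?thesis
      using descent_finish[OF dT Node.prems(1) I(1) refl Node.prems(2)] I
      by (intro exI[of _ "S \<inter> (\<Union>i\<in>I. leafset (cs ! i))"]) auto
  qed
qed



lemma pw:
  fixes x m m1 m2 L :: real
  assumes "x \<ge> 0" "3*m1 \<le> 2*m" "3*m2 \<le> 2*m" "m \<ge> 0" "L \<ge> 0"
    "b1 \<longrightarrow> bS" "b2 \<longrightarrow> bS" "\<not> (b1 \<and> b2)"
  shows "(if b1 then x * min (3*m1) (9*L) else 0) + (if b2 then x * min (3*m2) (9*L) else 0)
         + m * (if bS \<and> 2*m < 3*L then x else 0) \<le> (if bS then x * min (3*m) (9*L) else 0)"
proof -
  have k1: "x * min (3*mi) (9*L) + m * x \<le> x * min (3*m) (9*L)" if "3*mi \<le> 2*m" "2*m < 3*L" for mi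
  proof -
    have "min (3*mi) (9*L) + m \<le> min (3*m) (9*L)" using that assms by auto
    hence "x * (min (3*mi) (9*L) + m) \<le> x * min (3*m) (9*L)" using assms(1) by (rule mult_left_mono)
    thus ?thesis by (simp add: algebra_simps)
  qed
  have k2: "x * min (3*mi) (9*L) \<le> x * min (3*m) (9*L)" if "3*mi \<le> 2*m" for mi
    using that assms by (intro mult_left_mono) auto
  have k3: "m * x \<le> x * min (3*m) (9*L)" if "2*m < 3*L"
  proof -
    have "m \<le> min (3*m) (9*L)" using that assms by auto
    hence "x * m \<le> x * min (3*m) (9*L)" using assms(1) by (rule mult_left_mono)
    thus ?thesis by (simp add: algebra_simps)
  qed
  have k4: "0 \<le> x * min (3*m) (9*L)" using assms by auto
  show ?thesis using k1[OF assms(2)] k1[OF assms(3)] k2[OF assms(2)] k2[OF assms(3)] k3 k4 assms(6-8)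
    by (auto split: if_splits)
qed

lemma main:
  assumes wg: "wgraph V E w" and hT: "hc_tree V Ts"
  shows "bal_mincut_tree (1/3) E w T \<Longrightarrow> distinct (leaves T) \<Longrightarrow> leafset T \<subseteq> V \<Longrightarrow>
    (\<Sum>e\<in>E. if e \<subseteq> leafset T then w e * real (Lc T e) else 0)
     \<le> (\<Sum>e\<in>E. if e \<subseteq> leafset T then w e * min (3 * real (card (leafset T))) (9 * real (Lc Ts e)) else 0)"
proof (induction T rule: hctree.induct)
  case (Leaf x)
  have "\<forall>e\<in>E. \<not> e \<subseteq> {x}"
  proof
    fix e assume "e \<in> E" hence "card e = 2" using wg unfolding wgraph_def by auto
    thus "\<not> e \<subseteq> {x}" using card_mono[of "{x}" e] by auto
  qed
  thus ?case by simp
next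
  case (Node ts)
  from wg have finV: "finite V" and Eprop: "\<forall>e\<in>E. e \<subseteq> V \<and> card e = 2 \<and> w e \<ge> 0"
    unfolding wgraph_def by auto
  have finE: "finite E" using finV Eprop by (meson Pow_iff finite_Pow_iff rev_finite_subset subsetI)
  obtain t1 t2 where ts: "ts = [t1, t2]" using Node.prems(1) by (auto split: list.splits)
  define S1 where "S1 = leafset t1"
  define S2 where "S2 = leafset t2"
  define S where "S = leafset (Node ts)"
  let ?m = "card S"
  have SS: "S = S1 \<union> S2" unfolding S_def S1_def S2_def ts by auto
  have dis: "S1 \<inter> S2 = {}" and d1: "distinct (leaves t1)" and d2: "distinct (leaves t2)"
    using Node.prems(2) unfolding ts S1_def S2_def by auto
  have bm: "balanced (1/3) S1 S2" and
    mc: "\<forall>A B. A \<inter> B = {} \<and> A \<union> B = S \<and> balanced (1/3) A B \<longrightarrow>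
                 cut_weight E w S1 S2 \<le> cut_weight E w A B" and
    b1: "bal_mincut_tree (1/3) E w t1" and b2: "bal_mincut_tree (1/3) E w t2"
    using Node.prems(1) unfolding ts S1_def S2_def S_def by auto
  have finS: "finite S" unfolding S_def by simp
  have cS: "?m = card S1 + card S2" unfolding SS using dis by (simp add: S1_def S2_def card_Un_disjoint)
  have m1: "3 * card S1 \<le> 2 * ?m" and m2: "3 * card S2 \<le> 2 * ?m"
    using bm unfolding balanced_def SS[symmetric] by auto
  have SV: "S \<subseteq> V" using Node.prems(3) S_def by auto
  have IH1: "(\<Sum>e\<in>E. if e \<subseteq> S1 then w e * real (Lc t1 e) else 0)
     \<le> (\<Sum>e\<in>E. if e \<subseteq> S1 then w e * min (3 * real (card S1)) (9 * real (Lc Ts e)) else 0)"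
    using Node.IH[of t1] b1 d1 SV SS unfolding ts S1_def by auto
  have IH2: "(\<Sum>e\<in>E. if e \<subseteq> S2 then w e * real (Lc t2 e) else 0)
     \<le> (\<Sum>e\<in>E. if e \<subseteq> S2 then w e * min (3 * real (card S2)) (9 * real (Lc Ts e)) else 0)"
    using Node.IH[of t2] b2 d2 SV SS unfolding ts S2_def by auto
  show ?case
  proof (cases "?m < 2")
    case True
    have "\<forall>e\<in>E. \<not> e \<subseteq> S"
    proof
      fix e assume "e \<in> E" hence "card e = 2" using Eprop by auto
      thus "\<not> e \<subseteq> S" using card_mono[OF finS, of e] True by auto
    qed
    thus ?thesis unfolding S_def by simp
  next
    case False
    have m2': "2 \<le> ?m" using False by auto
    have dTs: "distinct (leaves Ts)" and LTs: "leafset Ts = V" using hT unfolding hc_tree_def by auto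
    have "2 * ?m < 3 * card (S \<inter> leafset Ts)" using SV LTs m2' by (simp add: Int_absorb2)
    then obtain A where A: "A \<subseteq> S" "?m \<le> 3 * card A" "3 * card A \<le> 2 * ?m"
      and Aprop: "\<forall>e. e \<subseteq> leafset Ts \<longrightarrow> e \<noteq> {} \<longrightarrow> e \<inter> A \<noteq> {} \<longrightarrow> e \<inter> (S - A) \<noteq> {} \<longrightarrow> 2 * ?m < 3 * Lc Ts e"
      using descent[OF dTs finS m2' subtrees_self[of Ts]] by blast
    have finA: "finite A" using A(1) finS finite_subset by blast
    have cB: "card (S - A) = ?m - card A" using card_Diff_subset[OF finA A(1)] .
    have cA: "card A \<le> ?m" using card_mono[OF finS A(1)] .
    have "3 * max (card A) (card (S - A)) \<le> 2 * ?m" using A cB cA by auto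
    hence "real (3 * max (card A) (card (S - A))) \<le> real (2 * ?m)" by (simp only: of_nat_le_iff)
    hence "real (max (card A) (card (S - A))) \<le> (1 - 1/3) * real ?m" by simp
    moreover have AU: "A \<union> (S - A) = S" using A(1) by auto
    ultimately have balAB: "balanced (1/3) A (S - A)" unfolding balanced_def by simp
    have cutAB: "cut_weight E w S1 S2 \<le> cut_weight E w A (S - A)"
      by (rule mc[rule_format]) (use balAB AU in auto)
    have e2: "e = {a, b}" if "e \<in> E" "a \<in> e" "b \<in> e" "a \<noteq> b" for e a b
    proof -
      have ce: "card e = 2" using Eprop that(1) by auto
      hence fe: "finite e" by (intro card_ge_0_finite) simp
      have sub: "{a, b} \<subseteq> e" using that by auto
      have "card {a, b} = card e" using ce that(4) by simp
      from card_subset_eq[OF fe sub this] show ?thesis by simp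
    qed
    have cut2: "cut_weight E w A (S - A) \<le> (\<Sum>e\<in>E. if e \<subseteq> S \<and> 2 * real ?m < 3 * real (Lc Ts e) then w e else 0)"
    proof -
      have "cut_weight E w A (S - A) \<le> sum w {e\<in>E. e \<subseteq> S \<and> 2 * real ?m < 3 * real (Lc Ts e)}"
        unfolding cut_weight_def
      proof (rule sum_mono2)
        show "finite {e\<in>E. e \<subseteq> S \<and> 2 * real ?m < 3 * real (Lc Ts e)}" using finE by auto
        show "0 \<le> w b" if "b \<in> {e\<in>E. e \<subseteq> S \<and> 2 * real ?m < 3 * real (Lc Ts e)} - {e\<in>E. e \<inter> A \<noteq> {} \<and> e \<inter> (S - A) \<noteq> {}}" for b
          using Eprop that by auto
        show "{e\<in>E. e \<inter> A \<noteq> {} \<and> e \<inter> (S - A) \<noteq> {}} \<subseteq> {e\<in>E. e \<subseteq> S \<and> 2 * real ?m < 3 * real (Lc Ts e)}"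
        proof
          fix e assume "e \<in> {e\<in>E. e \<inter> A \<noteq> {} \<and> e \<inter> (S - A) \<noteq> {}}"
          hence e: "e \<in> E" "e \<inter> A \<noteq> {}" "e \<inter> (S - A) \<noteq> {}" by auto
          obtain a b where ab: "a \<in> e" "a \<in> A" "b \<in> e" "b \<in> S - A" using e by auto
          have "e = {a, b}" using e2[OF e(1) ab(1) ab(3)] ab by auto
          hence "e \<subseteq> S" using ab A(1) by auto
          moreover have "e \<subseteq> leafset Ts" using Eprop e(1) LTs by auto
          ultimately have "2 * ?m < 3 * Lc Ts e" using Aprop e by auto
          hence "2 * real ?m < 3 * real (Lc Ts e)" by linarith
          thus "e \<in> {e\<in>E. e \<subseteq> S \<and> 2 * real ?m < 3 * real (Lc Ts e)}" using \<open>e \<subseteq> S\<close> e(1) by auto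
        qed
      qed
      thus ?thesis by (simp add: sum.inter_filter[OF finE])
    qed
    have cut3: "(\<Sum>e\<in>E. if e \<subseteq> S \<and> \<not> e \<subseteq> S1 \<and> \<not> e \<subseteq> S2 then w e else 0) \<le> cut_weight E w S1 S2"
    proof -
      have "sum w {e\<in>E. e \<subseteq> S \<and> \<not> e \<subseteq> S1 \<and> \<not> e \<subseteq> S2} \<le> cut_weight E w S1 S2"
        unfolding cut_weight_def
        by (rule sum_mono2) (use finE Eprop SS in auto)
      thus ?thesis by (simp add: sum.inter_filter[OF finE])
    qed
    have ptw: "(if e \<subseteq> S then w e * real (Lc (Node ts) e) else 0)
       = (if e \<subseteq> S1 then w e * real (Lc t1 e) else 0) + (if e \<subseteq> S2 then w e * real (Lc t2 e) else 0)
         + real ?m * (if e \<subseteq> S \<and> \<not> e \<subseteq> S1 \<and> \<not> e \<subseteq> S2 then w e else 0)" if eE: "e \<in> E" for e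
    proof -
      have ne: "e \<noteq> {}" using Eprop eE by fastforce
      have t1: "t1 \<in> set ts" and t2: "t2 \<in> set ts" using ts by auto
      show ?thesis
      proof (cases "e \<subseteq> S1")
        case True
        hence "\<not> e \<subseteq> S2" using dis ne by blast
        moreover have "lcaS (Node ts) e = lcaS t1 e" using lcaS_child[OF Node.prems(2) t1 _ ne] True S1_def by auto
        ultimately show ?thesis using True SS by auto
      next
        case F1: False
        show ?thesis
        proof (cases "e \<subseteq> S2")
          case True
          have "lcaS (Node ts) e = lcaS t2 e" using lcaS_child[OF Node.prems(2) t2 _ ne] True S2_def by auto
          thus ?thesis using True F1 SS by auto
        next
          case F2: False
          show ?thesis
          proof (cases "e \<subseteq> S")
            case True
            have "\<forall>c\<in>set ts. \<not> e \<subseteq> leafset c" using F1 F2 ts S1_def S2_def by auto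
            hence "lcaS (Node ts) e = Node ts" using lcaS_root True S_def by auto
            thus ?thesis using True F1 F2 S_def by auto
          qed (use F1 F2 in auto)
        qed
      qed
    qed
    have "(\<Sum>e\<in>E. if e \<subseteq> S then w e * real (Lc (Node ts) e) else 0)
       = (\<Sum>e\<in>E. if e \<subseteq> S1 then w e * real (Lc t1 e) else 0) + (\<Sum>e\<in>E. if e \<subseteq> S2 then w e * real (Lc t2 e) else 0)
         + real ?m * (\<Sum>e\<in>E. if e \<subseteq> S \<and> \<not> e \<subseteq> S1 \<and> \<not> e \<subseteq> S2 then w e else 0)"
      by (simp add: ptw sum.distrib sum_distrib_left cong: sum.cong)
    also have "\<dots> \<le> (\<Sum>e\<in>E. if e \<subseteq> S1 then w e * min (3 * real (card S1)) (9 * real (Lc Ts e)) else 0)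
        + (\<Sum>e\<in>E. if e \<subseteq> S2 then w e * min (3 * real (card S2)) (9 * real (Lc Ts e)) else 0)
        + real ?m * (\<Sum>e\<in>E. if e \<subseteq> S \<and> 2 * real ?m < 3 * real (Lc Ts e) then w e else 0)"
    proof -
      have "(\<Sum>e\<in>E. if e \<subseteq> S \<and> \<not> e \<subseteq> S1 \<and> \<not> e \<subseteq> S2 then w e else 0)
           \<le> (\<Sum>e\<in>E. if e \<subseteq> S \<and> 2 * real ?m < 3 * real (Lc Ts e) then w e else 0)"
        using cut3 cutAB cut2 by linarith
      hence "real ?m * (\<Sum>e\<in>E. if e \<subseteq> S \<and> \<not> e \<subseteq> S1 \<and> \<not> e \<subseteq> S2 then w e else 0)
           \<le> real ?m * (\<Sum>e\<in>E. if e \<subseteq> S \<and> 2 * real ?m < 3 * real (Lc Ts e) then w e else 0)"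
        by (rule mult_left_mono) simp
      thus ?thesis using IH1 IH2 by linarith
    qed
    also have "\<dots> = (\<Sum>e\<in>E. (if e \<subseteq> S1 then w e * min (3 * real (card S1)) (9 * real (Lc Ts e)) else 0)
        + (if e \<subseteq> S2 then w e * min (3 * real (card S2)) (9 * real (Lc Ts e)) else 0)
        + real ?m * (if e \<subseteq> S \<and> 2 * real ?m < 3 * real (Lc Ts e) then w e else 0))"
      by (simp add: sum.distrib sum_distrib_left)
    also have "\<dots> \<le> (\<Sum>e\<in>E. if e \<subseteq> S then w e * min (3 * real ?m) (9 * real (Lc Ts e)) else 0)"
    proof (rule sum_mono)
      fix e assume eE: "e \<in> E"
      have ne: "e \<noteq> {}" using Eprop eE by fastforce
      have "\<not> (e \<subseteq> S1 \<and> e \<subseteq> S2)" using dis ne by blast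
      moreover have "3 * real (card S1) \<le> 2 * real ?m" "3 * real (card S2) \<le> 2 * real ?m"
        using m1 m2 by linarith+
      ultimately show "(if e \<subseteq> S1 then w e * min (3 * real (card S1)) (9 * real (Lc Ts e)) else 0)
        + (if e \<subseteq> S2 then w e * min (3 * real (card S2)) (9 * real (Lc Ts e)) else 0)
        + real ?m * (if e \<subseteq> S \<and> 2 * real ?m < 3 * real (Lc Ts e) then w e else 0)
        \<le> (if e \<subseteq> S then w e * min (3 * real ?m) (9 * real (Lc Ts e)) else 0)"
        using Eprop eE SS by (intro pw) auto
    qed
    finally show ?thesis unfolding S_def .
  qed
qed



theorem lemma2p5:
  fixes V :: "'a set" and E :: "'a set set" and w :: "'a set \<Rightarrow> real"
    and T_bal :: "'a hctree"
  assumes "wgraph V E w"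
    and "hc_tree V T_bal"
    and "bal_mincut_tree (1/3) E w T_bal"
  shows "hc_cost E w T_bal \<le> 9 * OPT V E w"
proof -
  from assms(1) have Eprop: "\<forall>e\<in>E. e \<subseteq> V \<and> card e = 2 \<and> w e \<ge> 0"
    unfolding wgraph_def by auto
  have dT: "distinct (leaves T_bal)" and LT: "leafset T_bal = V" using assms(2) unfolding hc_tree_def by auto
  have cost: "hc_cost E w T = (\<Sum>e\<in>E. w e * real (Lc T e))" for T
    unfolding hc_cost_def
  proof (rule sum.cong)
    fix e assume "e \<in> E"
    hence "card e = 2" using Eprop by auto
    thus "w e * real (card (leafset (edge_lca T e))) = w e * real (Lc T e)" by (simp add: edge_lca_eq)
  qed simp
  have bound: "hc_cost E w T_bal \<le> 9 * hc_cost E w Ts" if hT: "hc_tree V Ts" for Ts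
  proof -
    have "hc_cost E w T_bal = (\<Sum>e\<in>E. if e \<subseteq> leafset T_bal then w e * real (Lc T_bal e) else 0)"
      unfolding cost by (rule sum.cong) (use Eprop LT in auto)
    also have "\<dots> \<le> (\<Sum>e\<in>E. if e \<subseteq> leafset T_bal then w e * min (3 * real (card (leafset T_bal))) (9 * real (Lc Ts e)) else 0)"
      by (rule main[OF assms(1) hT assms(3) dT]) (simp add: LT)
    also have "\<dots> \<le> (\<Sum>e\<in>E. 9 * (w e * real (Lc Ts e)))"
    proof (rule sum_mono)
      fix e assume "e \<in> E"
      hence w0: "w e \<ge> 0" using Eprop by auto
      have "w e * min (3 * real (card (leafset T_bal))) (9 * real (Lc Ts e)) \<le> w e * (9 * real (Lc Ts e))"
        by (rule mult_left_mono[OF _ w0]) simp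
      hence "w e * min (3 * real (card (leafset T_bal))) (9 * real (Lc Ts e)) \<le> 9 * (w e * real (Lc Ts e))"
        by (simp add: algebra_simps)
      moreover have "0 \<le> 9 * (w e * real (Lc Ts e))" using w0 by simp
      ultimately show "(if e \<subseteq> leafset T_bal then w e * min (3 * real (card (leafset T_bal))) (9 * real (Lc Ts e)) else 0)
            \<le> 9 * (w e * real (Lc Ts e))"
        by auto
    qed
    also have "\<dots> = 9 * hc_cost E w Ts" unfolding cost by (simp add: sum_distrib_left)
    finally show ?thesis .
  qed
  have "hc_cost E w T_bal / 9 \<le> OPT V E w"
    unfolding OPT_def
  proof (rule cINF_greatest)
    show "{T. hc_tree V T} \<noteq> {}" using assms(2) by auto
    fix Ts assume "Ts \<in> {T. hc_tree V T}"
    thus "hc_cost E w T_bal / 9 \<le> hc_cost E w Ts" using bound by fastforce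
  qed
  thus ?thesis by simp
qed


end
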